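(* Let $p$ be an odd prime. Then \[ Z^{+}(p)\equiv B_{2(p-1)}-B_{p-1}-\tfrac{1}{2}H_{\frac{p-1}{2}}\pmod{p} \] and \[ Z^{+}(p)\equiv\tfrac{1}{2}\left(M_{0}(p)+M_{\frac{p-1}{2}}(p)\right)\pmod{p}, \] where $M_{k}(p)=\frac{1+(-1)^{k}k!(p-k-1)!}{p}$ and $Z^{+}(p)=\sum_{k=0}^{p-1}(-1)^kM_k(p)$.
   Context: $B_m$ are the Bernoulli numbers defined by $\frac{x}{e^{x}-1}=\sum_{m\ge0}B_m\frac{x^m}{m!}$. $H_k=\sum_{j=1}^k\frac1j$. For rationals $a,b$, $a\equiv b\pmod p$ means $a-b=pc$ for a rational $c$ whose denominator is coprime to $p$. *)

theory Defs
  imports "HOL-Computational_Algebra.Computational_Algebra" "HOL-Number_Theory.Number_Theory"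
begin

definition bernoulli_fps :: "rat fps" where
  "bernoulli_fps = fps_X / (fps_exp 1 - 1)"

definition bernoulli :: "nat \<Rightarrow> rat" where
  "bernoulli m = fact m * fps_nth bernoulli_fps m"

definition harmonic :: "nat \<Rightarrow> rat" where
  "harmonic k = (\<Sum>j=1..k. 1 / of_nat j)"

definition rat_cong :: "rat \<Rightarrow> rat \<Rightarrow> nat \<Rightarrow> bool" where
  "rat_cong a b p \<longleftrightarrow> (\<exists>c. a - b = of_nat p * c \<and> coprime (snd (quotient_of c)) (int p))"

definition M :: "nat \<Rightarrow> nat \<Rightarrow> rat" where
  "M k p = (1 + (-1)^k * fact k * fact (p - k - 1)) / of_nat p"

definition Zplus :: "nat \<Rightarrow> rat" where
  "Zplus p = (\<Sum>k=0..p-1. (-1)^k * M k p)"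

end

theory Submission
  imports Defs "HOL-Number_Theory.Number_Theory"
begin


lemma bfps_eq: "bernoulli_fps * (fps_exp 1 - 1) = fps_X"
proof -
  have ne: "(fps_exp 1 - 1 :: rat fps) \<noteq> 0"
  proof
    assume "(fps_exp 1 - 1 :: rat fps) = 0"
    hence "(fps_exp 1 - 1 :: rat fps) $ 1 = 0" by simp
    thus False by simp
  qed
  have "subdegree (fps_exp 1 - 1 :: rat fps) \<le> 1"
    by (rule subdegree_leI) simp
  hence "subdegree (fps_exp 1 - 1 :: rat fps) \<le> subdegree (fps_X :: rat fps)" by simp
  thus ?thesis unfolding bernoulli_fps_def using fps_times_divide_eq[OF ne] by blast
qed

lemma bfps_nth: "bernoulli_fps $ n = bernoulli n / fact n"
  by (simp add: bernoulli_def)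

lemma telescope_exp:
  "(fps_exp 1 - 1) * (\<Sum>j<N. fps_exp (of_nat j)) = (fps_exp (of_nat N) - 1 :: rat fps)"
proof (induction N)
  case 0 then show ?case by simp
next
  case (Suc N)
  have "fps_exp (of_nat (Suc N)) = fps_exp 1 * (fps_exp (of_nat N) :: rat fps)"
    using fps_exp_add_mult[of 1 "of_nat N :: rat"] by (simp add: add.commute)
  then show ?case using Suc by (simp add: algebra_simps)
qed

lemma faulhaber_fps:
  "fps_X * (\<Sum>j<N. fps_exp (of_nat j)) = bernoulli_fps * (fps_exp (of_nat N) - 1 :: rat fps)"
  by (metis bfps_eq telescope_exp mult.assoc)

lemma gen1: "(c::'a::field) \<noteq> 0 \<Longrightarrow> (c / q * b * x / s) / c = b * x / (q * s)"
  by (simp add: field_simps)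

lemma faulhaber:
  "(\<Sum>j<N. (of_nat j :: rat) ^ n) =
     (\<Sum>i\<le>n. of_nat (n choose i) * bernoulli i * of_nat N ^ (n + 1 - i) / of_nat (n + 1 - i))"
proof -
  have L: "(fps_X * (\<Sum>j<N. fps_exp (of_nat j)) :: rat fps) $ Suc n = (\<Sum>j<N. (of_nat j :: rat) ^ n) / fact n"
    by (simp add: fps_sum_nth sum_divide_distrib)
  have R: "(bernoulli_fps * (fps_exp (of_nat N) - 1 :: rat fps)) $ Suc n =
      (\<Sum>i\<le>n. bernoulli i * of_nat N ^ (Suc n - i) / (fact (Suc n - i) * fact i))"
    unfolding fps_mult_nth
    by (simp add: atLeast0AtMost bfps_nth)
  have E: "bernoulli i * of_nat N ^ (Suc n - i) / (fact (Suc n - i) * fact i) =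
     (of_nat (n choose i) * bernoulli i * of_nat N ^ (n + 1 - i) / of_nat (n + 1 - i)) / fact n"
    if i_le: "i \<le> n" for i
  proof -
    obtain m where m: "n = i + m" using le_Suc_ex[OF i_le] by blast
    have f1: "(fact (Suc m) :: rat) = of_nat (Suc m) * fact m"
      by (rule fact_Suc)
    have f2: "(of_nat (n choose i) :: rat) = fact n / (fact i * fact m)"
      using binomial_fact[OF that] m by (simp only: diff_add_inverse)
    have e1: "Suc n - i = Suc m" "n + 1 - i = Suc m" using m by auto
    have "fact n \<noteq> (0::rat)" "fact i \<noteq> (0::rat)" "fact m \<noteq> (0::rat)" by auto
    have "(fact n / (fact i * fact m) * bernoulli i * of_nat N ^ Suc m / of_nat (Suc m)) / fact n
        = bernoulli i * of_nat N ^ Suc m / ((fact i * fact m) * of_nat (Suc m))"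
      by (rule gen1) simp
    then show ?thesis unfolding e1 f1 f2 by (simp only: mult_ac)
  qed
  have "(\<Sum>j<N. (of_nat j :: rat) ^ n) / fact n =
     (\<Sum>i\<le>n. of_nat (n choose i) * bernoulli i * of_nat N ^ (n + 1 - i) / of_nat (n + 1 - i)) / fact n"
  proof -
    have S: "(\<Sum>i\<le>n. bernoulli i * of_nat N ^ (Suc n - i) / (fact (Suc n - i) * fact i)) =
      (\<Sum>i\<le>n. (of_nat (n choose i) * bernoulli i * of_nat N ^ (n + 1 - i) / of_nat (n + 1 - i)) / fact n)"
      by (rule sum.cong[OF refl], rule E, simp)
    have "(\<Sum>j<N. (of_nat j :: rat) ^ n) / fact n = (bernoulli_fps * (fps_exp (of_nat N) - 1 :: rat fps)) $ Suc n"
      by (simp only: L[symmetric] faulhaber_fps)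
    also have "\<dots> = (\<Sum>i\<le>n. (of_nat (n choose i) * bernoulli i * of_nat N ^ (n + 1 - i) / of_nat (n + 1 - i)) / fact n)"
      using R S by (rule trans)
    finally show ?thesis by (simp only: sum_divide_distrib)
  qed
  thus ?thesis by (simp only: divide_cancel_right fact_nonzero simp_thms)
qed


definition alt :: "rat fps \<Rightarrow> rat fps" where
  "alt f = Abs_fps (\<lambda>n. (-1)^n * f $ n)"

lemma alt_nth[simp]: "alt f $ n = (-1)^n * f $ n"
  by (simp add: alt_def)

lemma alt_mult: "alt (f * g) = alt f * alt g"
proof (rule fps_ext)
  fix n
  have "(\<Sum>i=0..n. (-1)^n * (f$i * g$(n-i))) = (\<Sum>i=0..n. (-1)^i * f$i * ((-1)^(n-i) * g$(n-i)))"
  proof (rule sum.cong[OF refl])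
    fix i assume "i \<in> {0..n}"
    hence "(-1::rat)^n = (-1)^i * (-1)^(n-i)" by (simp flip: power_add)
    thus "(-1)^n * (f$i * g$(n-i)) = (-1)^i * f$i * ((-1)^(n-i) * g$(n-i))" by simp
  qed
  thus "alt (f * g) $ n = (alt f * alt g) $ n"
    by (simp add: fps_mult_nth sum_distrib_left)
qed

lemma alt_diff: "alt (f - g) = alt f - alt g"
  by (rule fps_ext) (simp add: algebra_simps)

lemma alt_X: "alt fps_X = - fps_X"
  by (rule fps_ext) simp

lemma alt_one: "alt 1 = 1"
  by (rule fps_ext) simp

lemma alt_exp: "alt (fps_exp 1) = fps_exp (-1)"
  by (rule fps_ext) (simp add: power_minus')

lemma exp_inv: "fps_exp (1::rat) * fps_exp (-1) = 1"
  using fps_exp_add_mult[of "1::rat" "-1"] by simp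

lemma bernoulli_odd:
  assumes "odd n" "n \<ge> 3"
  shows "bernoulli n = 0"
proof -
  let ?E = "fps_exp 1 :: rat fps" and ?E' = "fps_exp (-1) :: rat fps"
  have a1: "alt bernoulli_fps * (?E' - 1) = - fps_X"
    using arg_cong[OF bfps_eq, of alt] by (simp add: alt_mult alt_diff alt_X alt_one alt_exp)
  have "alt bernoulli_fps * (?E - 1) = alt bernoulli_fps * (?E' - 1) * (- ?E)"
    using exp_inv by (simp add: algebra_simps)
  also have "\<dots> = fps_X * ?E" using a1 by simp
  also have "\<dots> = (bernoulli_fps + fps_X) * (?E - 1)"
    using bfps_eq by (simp add: algebra_simps)
  finally have "(alt bernoulli_fps - (bernoulli_fps + fps_X)) * (?E - 1) = 0"
    by (simp add: algebra_simps)
  moreover have "?E - 1 \<noteq> 0"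
  proof
    assume "?E - 1 = 0"
    hence "(?E - 1) $ 1 = 0" by simp
    thus False by simp
  qed
  ultimately have "alt bernoulli_fps = bernoulli_fps + fps_X" by simp
  hence "alt bernoulli_fps $ n = (bernoulli_fps + fps_X) $ n" by simp
  hence "- (bernoulli_fps $ n) = bernoulli_fps $ n" using assms by simp
  hence "bernoulli_fps $ n = 0" by simp
  thus ?thesis by (simp add: bfps_nth)
qed


definition pint :: "nat \<Rightarrow> rat \<Rightarrow> bool" where
  "pint p c \<longleftrightarrow> coprime (snd (quotient_of c)) (int p)"

lemma pint_iff: "pint p c \<longleftrightarrow> (\<exists>a b. b \<noteq> 0 \<and> coprime b (int p) \<and> c = of_int a / of_int b)"
proof
  assume h: "pint p c"
  obtain a b where q: "quotient_of c = (a,b)" by (cases "quotient_of c")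
  show "\<exists>a b. b \<noteq> 0 \<and> coprime b (int p) \<and> c = of_int a / of_int b"
    using q quotient_of_div[OF q] quotient_of_denom_pos[OF q] h unfolding pint_def
    by (intro exI[of _ a] exI[of _ b]) auto
next
  assume "\<exists>a b. b \<noteq> 0 \<and> coprime b (int p) \<and> c = of_int a / of_int b"
  then obtain a b where ab: "b \<noteq> 0" "coprime b (int p)" "c = of_int a / of_int b" by blast
  obtain a' b' where q: "quotient_of c = (a',b')" by (cases "quotient_of c")
  have c': "c = of_int a' / of_int b'" "b' > 0" "coprime a' b'"
    using quotient_of_div[OF q] quotient_of_denom_pos[OF q] quotient_of_coprime[OF q] by auto
  have "(of_int a' :: rat) / of_int b' = of_int a / of_int b" using ab c' by simp
  hence "(of_int a' :: rat) * of_int b = of_int a * of_int b'" using ab c' by (simp add: field_simps)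
  hence e: "a' * b = a * b'" by (simp only: of_int_mult[symmetric] of_int_eq_iff)
  hence "b' dvd a' * b" by (metis dvd_triv_right)
  hence "b' dvd b" using c'(3) by (metis coprime_commute coprime_dvd_mult_left_iff mult.commute)
  then obtain k where "b = b' * k" by (elim dvdE)
  hence "coprime b' (int p)" using ab(2) by simp
  thus "pint p c" using q by (simp add: pint_def)
qed

lemma pintI: "b \<noteq> 0 \<Longrightarrow> coprime b (int p) \<Longrightarrow> pint p (of_int a / of_int b)"
  unfolding pint_iff by blast

lemma pint_add: assumes "pint p x" "pint p y" shows "pint p (x + y)"
proof -
  obtain a b where 1: "b \<noteq> 0" "coprime b (int p)" "x = of_int a / of_int b" using assms(1) pint_iff by blast
  obtain a2 b2 where 2: "b2 \<noteq> 0" "coprime b2 (int p)" "y = of_int a2 / of_int b2" using assms(2) pint_iff by blast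
  have eq: "x + y = of_int (a * b2 + a2 * b) / of_int (b * b2)" unfolding 1(3) 2(3) using 1 2 by (simp add: field_simps)
  show ?thesis unfolding eq by (rule pintI) (use 1 2 in simp_all)
qed

lemma pint_mult: assumes "pint p x" "pint p y" shows "pint p (x * y)"
proof -
  obtain a b where 1: "b \<noteq> 0" "coprime b (int p)" "x = of_int a / of_int b" using assms(1) pint_iff by blast
  obtain a2 b2 where 2: "b2 \<noteq> 0" "coprime b2 (int p)" "y = of_int a2 / of_int b2" using assms(2) pint_iff by blast
  have eq: "x * y = of_int (a * a2) / of_int (b * b2)" unfolding 1(3) 2(3) by simp
  show ?thesis unfolding eq by (rule pintI) (use 1 2 in simp_all)
qed

lemma pint_uminus: assumes "pint p x" shows "pint p (- x)"
proof -
  obtain a b where 1: "b \<noteq> 0" "coprime b (int p)" "x = of_int a / of_int b" using assms(1) pint_iff by blast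
  have eq: "- x = of_int (- a) / of_int b" using 1 by simp
  show ?thesis unfolding eq by (rule pintI) (use 1 in simp_all)
qed

lemma pint_diff: "pint p x \<Longrightarrow> pint p y \<Longrightarrow> pint p (x - y)"
  using pint_add[of p x "- y"] pint_uminus[of p y] by simp

lemma pint_of_int[simp]: "pint p (of_int k)"
  using pintI[of 1 p k] by simp

lemma pint_of_nat[simp]: "pint p (of_nat k)"
  using pint_of_int[of p "int k"] by simp

lemma pint_0[simp]: "pint p 0" and pint_1[simp]: "pint p 1"
  using pint_of_int[of p 0] pint_of_int[of p 1] by simp_all

lemma pint_numeral[simp]: "pint p (numeral n)"
  using pint_of_nat[of p "numeral n"] by simp

lemma pint_inv_int: "coprime k (int p) \<Longrightarrow> pint p (1 / of_int k)"
proof (cases "k = 0")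
  case False
  assume "coprime k (int p)"
  thus ?thesis using pintI[of k p 1] False by simp
qed simp

lemma pint_sum: "(\<And>x. x \<in> A \<Longrightarrow> pint p (f x)) \<Longrightarrow> pint p (sum f A)"
  by (induction A rule: infinite_finite_induct) (auto intro: pint_add)

lemma pint_prod: "(\<And>x. x \<in> A \<Longrightarrow> pint p (f x)) \<Longrightarrow> pint p (prod f A)"
  by (induction A rule: infinite_finite_induct) (auto intro: pint_mult)

lemma pint_power: "pint p x \<Longrightarrow> pint p (x ^ n)"
  by (induction n) (auto intro: pint_mult)

lemma pint_inv_nat:
  assumes "prime p" "0 < j" "j < p"
  shows "pint p (1 / of_nat j)"
proof -
  have "\<not> p dvd j"
  proof
    assume "p dvd j"
    hence "p \<le> j" using assms(2) by (rule dvd_imp_le)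
    thus False using assms(3) by simp
  qed
  hence "coprime p j" using assms(1) prime_imp_coprime by blast
  hence "coprime (int j) (int p)" by (simp add: coprime_commute)
  hence "pint p (1 / of_int (int j))" by (rule pint_inv_int)
  thus ?thesis by simp
qed

lemma pint_half:
  assumes "prime p" "odd p"
  shows "pint p (1 / 2)"
proof -
  have "p \<noteq> 2" using assms(2) by auto
  moreover have "2 \<le> p" using prime_ge_2_nat[OF assms(1)] .
  ultimately have "2 < p" by simp
  thus ?thesis using pint_inv_nat[OF assms(1), of 2] by simp
qed

lemma rat_cong_iff:
  assumes "p > 0" shows "rat_cong a b p \<longleftrightarrow> pint p ((a - b) / of_nat p)"
proof
  assume "rat_cong a b p"
  then obtain c where c: "a - b = of_nat p * c" "pint p c" unfolding rat_cong_def pint_def[symmetric] by blast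
  have "(a - b) / of_nat p = c" using c(1) assms by simp
  thus "pint p ((a - b) / of_nat p)" using c(2) by simp
next
  assume h: "pint p ((a - b) / of_nat p)"
  have "a - b = of_nat p * ((a - b) / of_nat p)" using assms by simp
  thus "rat_cong a b p" using h unfolding rat_cong_def pint_def[symmetric] by blast
qed


definition Pk :: "nat \<Rightarrow> nat \<Rightarrow> rat" where
  "Pk p k = (\<Prod>j\<in>{1..k}. (1 - of_nat p / of_nat j))"

lemma harmonic_0[simp]: "harmonic 0 = 0"
  by (simp add: harmonic_def)

lemma harmonic_Suc: "harmonic (Suc k) = harmonic k + 1 / of_nat (Suc k)"
  by (simp add: harmonic_def)

lemma Pk_0[simp]: "Pk p 0 = 1"
  by (simp add: Pk_def)

lemma Pk_Suc: "Pk p (Suc k) = Pk p k * (1 - of_nat p / of_nat (Suc k))"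
  by (simp add: Pk_def)

lemma H_pint:
  assumes "prime p" "k < p"
  shows "pint p (harmonic k)"
  unfolding harmonic_def
  by (rule pint_sum) (use assms in \<open>auto intro: pint_inv_nat\<close>)

lemma alg1: "(s::'a::field) \<noteq> 0 \<Longrightarrow>
  (1 - p*H + p^2*r) * (1 - p/s) = 1 - p*(H + 1/s) + p^2*(r + H/s - p*r/s)"
  by (simp add: field_simps power2_eq_square)

lemma P_cong:
  assumes "prime p"
  shows "k < p \<Longrightarrow> \<exists>r. pint p r \<and> Pk p k = 1 - of_nat p * harmonic k + of_nat p ^ 2 * r"
proof (induction k)
  case 0
  show ?case by (intro exI[of _ 0]) simp
next
  case (Suc k)
  then obtain r where r: "pint p r" "Pk p k = 1 - of_nat p * harmonic k + of_nat p ^ 2 * r" by auto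
  let ?s = "of_nat (Suc k) :: rat"
  let ?r = "r + harmonic k / ?s - of_nat p * r / ?s"
  have inv_s: "pint p (1 / ?s)" using pint_inv_nat[OF assms, of "Suc k"] Suc.prems by simp
  have hk: "pint p (harmonic k)" using H_pint[OF assms, of k] Suc.prems by simp
  have "pint p ?r"
    using pint_mult[OF hk inv_s] pint_mult[OF pint_mult[OF pint_of_nat r(1)] inv_s]
    by (auto intro!: pint_add pint_diff r(1) simp: divide_inverse)
  moreover have "Pk p (Suc k) = 1 - of_nat p * harmonic (Suc k) + of_nat p ^ 2 * ?r"
    unfolding Pk_Suc harmonic_Suc r(2) by (rule alg1) simp
  ultimately show ?case by blast
qed

lemma P_fact:
  assumes "prime p"
  shows "k < p \<Longrightarrow> fact k * fact (p - 1 - k) * Pk p k = (-1)^k * (fact (p - 1) :: rat)"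
proof (induction k)
  case 0 show ?case by simp
next
  case (Suc k)
  obtain d where d: "p = k + 2 + d" using Suc.prems by (metis add_2_eq_Suc' le_Suc_ex less_eq_Suc_le add.assoc add.commute)
  have e1: "p - 1 - k = Suc d" "p - 1 - Suc k = d" using d by auto
  have IH: "fact k * (of_nat (Suc d) * fact d) * Pk p k = (-1)^k * (fact (p - 1) :: rat)"
    using Suc.IH Suc.prems e1 by simp
  have "fact (Suc k) * fact (p - 1 - Suc k) * Pk p (Suc k)
      = (fact k * fact d * Pk p k) * (of_nat (Suc k) * (1 - of_nat p / of_nat (Suc k)) :: rat)"
    unfolding e1 Pk_Suc by (simp add: ac_simps)
  also have "(of_nat (Suc k) * (1 - of_nat p / of_nat (Suc k)) :: rat) = - of_nat (Suc d)"
    unfolding d by (simp add: field_simps)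
  also have "(fact k * fact d * Pk p k) * (- of_nat (Suc d)) = - (fact k * (of_nat (Suc d) * fact d) * Pk p k :: rat)"
    by (simp add: algebra_simps)
  also have "\<dots> = (-1) ^ Suc k * fact (p - 1)" unfolding IH by simp
  finally show ?case .
qed

lemma Pk_nz:
  assumes "prime p" "k < p"
  shows "Pk p k \<noteq> 0"
  unfolding Pk_def using assms by (auto simp: field_simps)

lemma Pk_inv_pint:
  assumes "prime p" "k < p"
  shows "pint p (1 / Pk p k)"
proof -
  have "1 / Pk p k = (\<Prod>j\<in>{1..k}. - (of_nat j * (1 / of_nat (p - j))))"
  proof -
    have "1 / Pk p k = (\<Prod>j\<in>{1..k}. 1 / (1 - of_nat p / of_nat j))"
      unfolding Pk_def by (simp add: prod_dividef)
    also have "\<dots> = (\<Prod>j\<in>{1..k}. - (of_nat j * (1 / of_nat (p - j))))"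
    proof (rule prod.cong[OF refl])
      fix j assume j: "j \<in> {1..k}"
      hence "j < p" "j \<ge> 1" using assms by auto
      hence "(of_nat (p - j) :: rat) = of_nat p - of_nat j" by (simp add: of_nat_diff)
      moreover have "(of_nat p :: rat) \<noteq> of_nat j" using \<open>j < p\<close> by simp
      ultimately show "1 / (1 - of_nat p / of_nat j) = - (of_nat j * (1 / of_nat (p - j)) :: rat)"
        using \<open>j \<ge> 1\<close> by (simp add: field_simps)
    qed
    finally show ?thesis .
  qed
  moreover have "pint p (\<Prod>j\<in>{1..k}. - (of_nat j * (1 / of_nat (p - j))))"
    by (rule pint_prod, rule pint_uminus, rule pint_mult[OF pint_of_nat], rule pint_inv_nat)
       (use assms in auto)
  ultimately show ?thesis by simp
qed

lemma wilson_rat: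
  assumes "prime p"
  obtains W :: int where "(fact (p - 1) :: rat) = of_nat p * of_int W - 1"
proof -
  have "[fact (p - 1) = - 1] (mod int p)" using wilson_theorem[OF assms] .
  hence "int p dvd fact (p - 1) + 1" by (simp add: cong_iff_dvd_diff)
  then obtain W where "fact (p - 1) + 1 = int p * W" by (elim dvdE)
  hence "(fact (p - 1) :: int) = int p * W - 1" by simp
  hence "(of_int (fact (p - 1)) :: rat) = of_int (int p * W - 1)" by simp
  hence "(fact (p - 1) :: rat) = of_nat p * of_int W - 1" by simp
  thus ?thesis by (rule that)
qed


lemma alg2:
  fixes p W H r P F :: "'a::field"
  assumes "P \<noteq> 0" "p \<noteq> 0" "F = p * W - 1" "P = 1 - p * H + p^2 * r"
  shows "((1 + F / P) / p - (W - H)) / p = (r + (W - H) * (H - p * r)) * (1 / P)"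
proof -
  have n: "P + F - p*(W-H)*P = p^2*(r + (W-H)*(H - p*r))"
    unfolding assms(3,4) by (simp add: algebra_simps power2_eq_square)
  have "((1 + F/P)/p - (W-H))/p = (P + F - p*(W-H)*P)/(p^2*P)"
    using assms(1,2) by (simp add: field_simps power2_eq_square)
  also have "\<dots> = (r + (W - H) * (H - p * r)) * (1 / P)"
    unfolding n using assms(1,2) by (simp add: power2_eq_square)
  finally show ?thesis .
qed

lemma M_cong:
  assumes "prime p" "k < p" "(fact (p - 1) :: rat) = of_nat p * of_int W - 1"
  shows "pint p ((M k p - (of_int W - harmonic k)) / of_nat p)"
proof -
  obtain r where r: "pint p r" "Pk p k = 1 - of_nat p * harmonic k + of_nat p ^ 2 * r"
    using P_cong[OF assms(1,2)] by blast
  have nz: "Pk p k \<noteq> 0" using Pk_nz[OF assms(1,2)] .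
  have pf: "fact k * fact (p - 1 - k) * Pk p k = (-1)^k * (fact (p - 1) :: rat)"
    using P_fact[OF assms(1,2)] .
  have "(-1)^k * fact k * fact (p - k - 1) = (fact (p - 1) :: rat) / Pk p k"
  proof -
    have pk: "p - k - 1 = p - 1 - k" by simp
    have "(-1)^k * fact k * fact (p - k - 1) * Pk p k = (-1)^k * (fact k * fact (p - 1 - k) * Pk p k :: rat)"
      unfolding pk by (simp only: ac_simps)
    also have "\<dots> = ((-1)^k * (-1)^k) * (fact (p - 1) :: rat)"
      unfolding pf by (simp only: ac_simps)
    also have "((-1::rat)^k * (-1)^k) = 1" by (simp flip: power_mult_distrib)
    finally have "(-1)^k * fact k * fact (p - k - 1) * Pk p k = (fact (p - 1) :: rat)" by simp
    then show ?thesis using nz by (simp add: field_simps)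
  qed
  hence Mk: "M k p = (1 + fact (p - 1) / Pk p k) / of_nat p" unfolding M_def by simp
  have p0: "(of_nat p :: rat) \<noteq> 0" using assms(1) prime_gt_0_nat by simp
  have eq: "(M k p - (of_int W - harmonic k)) / of_nat p =
      (r + (of_int W - harmonic k) * (harmonic k - of_nat p * r)) * (1 / Pk p k)"
    unfolding Mk by (rule alg2[OF nz p0 assms(3) r(2)])
  have hk: "pint p (harmonic k)" using H_pint[OF assms(1,2)] .
  show ?thesis unfolding eq
    by (intro pint_mult pint_add pint_diff r(1) hk Pk_inv_pint[OF assms(1,2)] pint_of_int pint_of_nat)
qed

lemma alt_one_sum: "(\<Sum>k=0..2*h. (-1::rat)^k) = 1"
proof (induction h)
  case 0 show ?case by simp
next
  case (Suc h)
  have "2 * Suc h = Suc (Suc (2 * h))" by simp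
  thus ?case using Suc by simp
qed

lemma alt_H_sum: "(\<Sum>k=0..2*h. (-1)^k * harmonic k) = harmonic h / 2"
proof (induction h)
  case 0 show ?case by simp
next
  case (Suc h)
  have e: "2 * Suc h = Suc (Suc (2 * h))" by simp
  have "(\<Sum>k=0..2*Suc h. (-1)^k * harmonic k) = harmonic h / 2 - harmonic (Suc (2*h)) + harmonic (Suc (Suc (2*h)))"
    unfolding e using Suc by simp
  also have "\<dots> = harmonic h / 2 + 1 / of_nat (Suc (Suc (2*h)))"
    by (simp only: harmonic_Suc[of "Suc (2*h)"])
  also have "\<dots> = harmonic (Suc h) / 2"
    by (simp add: harmonic_Suc field_simps)
  finally show ?case .
qed

lemma Z_cong:
  assumes "prime p" "odd p" "(fact (p - 1) :: rat) = of_nat p * of_int W - 1"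
  shows "pint p ((Zplus p - (of_int W - harmonic ((p - 1) div 2) / 2)) / of_nat p)"
proof -
  define h where "h = (p - 1) div 2"
  have ph: "p - 1 = 2 * h" unfolding h_def using assms(2) by simp
  have "(Zplus p - (of_int W - harmonic h / 2)) / of_nat p =
     (\<Sum>k=0..2*h. (-1)^k * ((M k p - (of_int W - harmonic k)) / of_nat p))"
  proof -
    have "(\<Sum>k=0..2*h. (-1)^k * ((M k p - (of_int W - harmonic k)) / of_nat p))
       = (\<Sum>k=0..2*h. (-1)^k * M k p - of_int W * (-1)^k + (-1)^k * harmonic k) / of_nat p"
      by (simp add: sum_divide_distrib algebra_simps)
    also have "\<dots> = (Zplus p - of_int W * (\<Sum>k=0..2*h. (-1)^k) + (\<Sum>k=0..2*h. (-1)^k * harmonic k)) / of_nat p"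
      unfolding Zplus_def ph by (simp add: sum.distrib sum_subtractf sum_distrib_left)
    also have "\<dots> = (Zplus p - (of_int W - harmonic h / 2)) / of_nat p"
      unfolding alt_one_sum alt_H_sum by simp
    finally show ?thesis by simp
  qed
  moreover have "pint p (\<Sum>k=0..2*h. (-1)^k * ((M k p - (of_int W - harmonic k)) / of_nat p))"
  proof (rule pint_sum)
    fix k assume "k \<in> {0..2*h}"
    moreover have "0 < p" using prime_gt_0_nat[OF assms(1)] .
    ultimately have "k < p" using ph by auto
    show "pint p ((-1)^k * ((M k p - (of_int W - harmonic k)) / of_nat p))"
      by (rule pint_mult[OF pint_power[OF pint_uminus[OF pint_1]] M_cong[OF assms(1) \<open>k < p\<close> assms(3)]])
  qed
  ultimately show ?thesis unfolding h_def by simp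
qed


lemma decomp: "prime p \<Longrightarrow> (m::nat) > 0 \<Longrightarrow> \<exists>e r. m = p^e * r \<and> \<not> p dvd r"
proof (induction m rule: less_induct)
  case (less m)
  show ?case
  proof (cases "p dvd m")
    case True
    then obtain m' where m': "m = p * m'" by (elim dvdE)
    have "p > 1" using less.prems prime_gt_1_nat by blast
    hence "m' < m" "m' > 0" using m' less.prems by auto
    then obtain e r where "m' = p^e * r" "\<not> p dvd r" using less.IH less.prems by blast
    hence "m = p^(Suc e) * r" using m' by simp
    thus ?thesis using \<open>\<not> p dvd r\<close> by blast
  next
    case False
    thus ?thesis by (intro exI[of _ 0] exI[of _ m]) simp
  qed
qed

lemma pint_pow_div:
  assumes "prime p" "m > 0" "m < p ^ Suc a"
  shows "pint p (of_nat p ^ a / of_nat m)"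
proof -
  obtain e r where er: "m = p^e * r" "\<not> p dvd r" using decomp[OF assms(1,2)] by blast
  have r0: "r > 0" using er assms(2) by (cases r) auto
  have "p ^ e \<le> m" using er r0 by simp
  hence "p ^ e < p ^ Suc a" using assms(3) by linarith
  hence "e < Suc a" using power_less_imp_less_exp[of p e "Suc a"] prime_gt_1_nat[OF assms(1)] by simp
  hence ea: "a = e + (a - e)" by simp
  have "coprime p r" using prime_imp_coprime[OF assms(1) er(2)] .
  hence cr: "coprime (int r) (int p)" by (simp add: coprime_commute)
  have "(of_nat p ^ a / of_nat m :: rat) = of_nat p ^ (a - e) * (1 / of_int (int r))"
  proof -
    have "(of_nat p ^ a :: rat) = of_nat p ^ e * of_nat p ^ (a - e)"
      by (subst ea) (simp add: power_add)
    moreover have "(of_nat m :: rat) = of_nat p ^ e * of_nat r" using er by simp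
    moreover have "(of_nat p :: rat) \<noteq> 0" using prime_gt_0_nat[OF assms(1)] by simp
    ultimately show ?thesis by simp
  qed
  thus ?thesis using pint_mult[OF pint_power[OF pint_of_nat] pint_inv_int[OF cr]] by simp
qed

lemma lt_pow: "(p::nat) \<ge> 2 \<Longrightarrow> x < p ^ x"
proof -
  assume "p \<ge> 2"
  have "x < 2 ^ x" by (rule less_exp)
  also have "\<dots> \<le> p ^ x" using \<open>p \<ge> 2\<close> by (simp add: power_mono)
  finally show ?thesis .
qed

lemma lt_pow5: "(p::nat) \<ge> 5 \<Longrightarrow> t + 3 < p ^ Suc t"
proof (induction t)
  case 0 thus ?case by simp
next
  case (Suc t)
  have "5 * (t + 3) \<le> p * (t + 3)" using Suc.prems by (rule mult_le_mono1)
  moreover have "Suc t + 3 < 5 * (t + 3)" by simp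
  ultimately have "Suc t + 3 < p * (t + 3)" by (rule less_le_trans[rotated])
  also have "\<dots> < p * p ^ Suc t" using Suc by simp
  finally show ?case by simp
qed

definition Ssum :: "nat \<Rightarrow> nat \<Rightarrow> rat" where
  "Ssum p n = (\<Sum>j<p. (of_nat j :: rat) ^ n)"

lemma faul_split:
  "Ssum p n = of_nat p * bernoulli n +
     (\<Sum>i<n. of_nat (n choose i) * (of_nat p * bernoulli i) * (of_nat p ^ (n - i) / of_nat (Suc (n - i))))"
proof -
  have "Ssum p n = (\<Sum>i\<le>n. of_nat (n choose i) * bernoulli i * of_nat p ^ (n + 1 - i) / of_nat (n + 1 - i))"
    unfolding Ssum_def by (rule faulhaber)
  also have "\<dots> = of_nat p * bernoulli n +
     (\<Sum>i<n. of_nat (n choose i) * bernoulli i * of_nat p ^ (n + 1 - i) / of_nat (n + 1 - i))"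
    by (simp add: lessThan_Suc_atMost[symmetric])
  also have "(\<Sum>i<n. of_nat (n choose i) * bernoulli i * of_nat p ^ (n + 1 - i) / of_nat (n + 1 - i)) =
     (\<Sum>i<n. of_nat (n choose i) * (of_nat p * bernoulli i) * (of_nat p ^ (n - i) / of_nat (Suc (n - i))))"
  proof (rule sum.cong[OF refl])
    fix i assume "i \<in> {..<n}"
    hence e: "n + 1 - i = Suc (n - i)" by auto
    show "of_nat (n choose i) * bernoulli i * of_nat p ^ (n + 1 - i) / of_nat (n + 1 - i) =
       of_nat (n choose i) * (of_nat p * bernoulli i) * (of_nat p ^ (n - i) / of_nat (Suc (n - i)) :: rat)"
      unfolding e by (simp add: field_simps)
  qed
  finally show ?thesis .
qed

lemma pB_pint:
  assumes "prime p"
  shows "pint p (of_nat p * bernoulli n)"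
proof (induction n rule: less_induct)
  case (less n)
  have "of_nat p * bernoulli n = Ssum p n -
     (\<Sum>i<n. of_nat (n choose i) * (of_nat p * bernoulli i) * (of_nat p ^ (n - i) / of_nat (Suc (n - i))))"
    using faul_split[of p n] by simp
  moreover have "pint p (Ssum p n)" unfolding Ssum_def
    by (intro pint_sum pint_power pint_of_nat)
  moreover have "pint p (\<Sum>i<n. of_nat (n choose i) * (of_nat p * bernoulli i) * (of_nat p ^ (n - i) / of_nat (Suc (n - i))))"
  proof (rule pint_sum)
    fix i assume "i \<in> {..<n}"
    hence "i < n" by simp
    have "Suc (n - i) < p ^ Suc (n - i)" using lt_pow prime_ge_2_nat[OF assms] by blast
    hence "pint p (of_nat p ^ (n - i) / of_nat (Suc (n - i)))" by (intro pint_pow_div[OF assms]) auto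
    thus "pint p (of_nat (n choose i) * (of_nat p * bernoulli i) * (of_nat p ^ (n - i) / of_nat (Suc (n - i))))"
      using pint_mult[OF pint_mult[OF pint_of_nat less.IH[OF \<open>i < n\<close>]]] by blast
  qed
  ultimately show ?case by (simp add: pint_diff)
qed

lemma alg3: "(c::'a::field) * b * (q * x / y) = q * (c * b * (x / y))"
  by simp

lemma pB_cong:
  assumes "prime p" "p \<ge> 5" "even n" "n \<ge> 4"
  shows "pint p ((of_nat p * bernoulli n - Ssum p n) / of_nat p ^ 2)"
proof -
  define n' where "n' = n - 2"
  have n': "n = Suc (Suc n')" unfolding n'_def using assms(4) by simp
  have "odd (Suc n')" using assms(3) n' by simp
  moreover have "Suc n' \<ge> 3" using assms(4) n' by simp
  ultimately have Bz: "bernoulli (Suc n') = 0" by (rule bernoulli_odd)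
  define t where "t i = of_nat (n choose i) * (of_nat p * bernoulli i) * (of_nat p ^ (n - i) / of_nat (Suc (n - i)) :: rat)" for i
  define u where "u i = of_nat (n choose i) * (of_nat p * bernoulli i) * (of_nat p ^ (n' - i) / of_nat (Suc (n - i)) :: rat)" for i
  have p0: "(of_nat p :: rat) \<noteq> 0" using prime_gt_0_nat[OF assms(1)] by simp
  have fs: "Ssum p n = of_nat p * bernoulli n + (\<Sum>i<n. t i)"
    unfolding t_def by (rule faul_split)
  have "{..<n} = insert (Suc n') {..<Suc n'}" using n' by auto
  hence "(\<Sum>i<n. t i) = t (Suc n') + (\<Sum>i<Suc n'. t i)" by simp
  also have "t (Suc n') = 0" unfolding t_def Bz by simp
  also have "(\<Sum>i<Suc n'. t i) = (\<Sum>i<Suc n'. of_nat p ^ 2 * u i)"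
  proof (rule sum.cong[OF refl])
    fix i assume "i \<in> {..<Suc n'}"
    hence "n - i = Suc (Suc (n' - i))" using n' by auto
    hence "(of_nat p :: rat) ^ (n - i) = of_nat p ^ 2 * of_nat p ^ (n' - i)"
      by (simp add: power2_eq_square)
    thus "t i = of_nat p ^ 2 * u i" unfolding t_def u_def by (simp only: alg3)
  qed
  finally have "(of_nat p * bernoulli n - Ssum p n) / of_nat p ^ 2 = - (\<Sum>i<Suc n'. u i)"
    unfolding fs using p0 by (simp add: sum_distrib_left[symmetric])
  moreover have "pint p (- (\<Sum>i<Suc n'. u i))"
  proof (intro pint_uminus pint_sum)
    fix i assume "i \<in> {..<Suc n'}"
    hence e: "Suc (n - i) = (n' - i) + 3" using n' by auto
    have "(n' - i) + 3 < p ^ Suc (n' - i)" using lt_pow5[OF assms(2)] .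
    hence "pint p (of_nat p ^ (n' - i) / of_nat (Suc (n - i)))"
      unfolding e by (intro pint_pow_div[OF assms(1)]) auto
    thus "pint p (u i)" unfolding u_def
      using pint_mult[OF pint_mult[OF pint_of_nat pB_pint[OF assms(1)]]] by blast
  qed
  ultimately show ?thesis by simp
qed


lemma prod_int_fact: "(\<Prod>j\<in>{1..<Suc m}. int j) = fact m"
  by (induction m) (simp_all add: prod.atLeastLessThan_Suc)

lemma prodcong:
  fixes a :: "nat \<Rightarrow> int" and q :: int
  assumes "finite A" "\<forall>j\<in>A. q dvd a j - 1"
  shows "q^2 dvd (\<Prod>j\<in>A. a j) - 1 - (\<Sum>j\<in>A. (a j - 1))"
  using assms
proof (induction A rule: finite_induct)
  case empty show ?case by simp
next
  case (insert x A)
  let ?P = "\<Prod>j\<in>A. a j" and ?S = "\<Sum>j\<in>A. (a j - 1)"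
  have IH: "q^2 dvd ?P - 1 - ?S" using insert by auto
  have qx: "q dvd a x - 1" using insert by auto
  have qS: "q dvd ?S" using insert by (auto intro: dvd_sum)
  have "q * q dvd (a x - 1) * ?S" using qx qS by (rule mult_dvd_mono)
  hence "q^2 dvd (a x - 1) * ?S" by (simp add: power2_eq_square)
  moreover have "q^2 dvd a x * (?P - 1 - ?S)" using IH by (rule dvd_mult)
  ultimately have "q^2 dvd a x * (?P - 1 - ?S) + (a x - 1) * ?S" by (rule dvd_add[rotated])
  moreover have "a x * (?P - 1 - ?S) + (a x - 1) * ?S = (\<Prod>j\<in>insert x A. a j) - 1 - (\<Sum>j\<in>insert x A. (a j - 1))"
    using insert by (simp add: algebra_simps)
  ultimately show ?case by simp
qed

lemma powcong: "(q::int)^2 dvd (1 + q*x)^m - 1 - int m * q * x"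
proof (induction m)
  case 0 show ?case by simp
next
  case (Suc m)
  let ?D = "(1 + q*x)^m - 1 - int m * q * x"
  have "(1 + q*x)^Suc m - 1 - int (Suc m) * q * x = (1 + q*x) * ?D + q^2 * (int m * x^2)"
    by (simp add: algebra_simps power2_eq_square)
  moreover have "q^2 dvd (1 + q*x) * ?D + q^2 * (int m * x^2)"
  proof (rule dvd_add)
    show "q^2 dvd (1 + q*x) * ?D" using Suc by (rule dvd_mult)
    show "q^2 dvd q^2 * (int m * x^2)" by (rule dvd_triv_left)
  qed
  ultimately show ?case by simp
qed

lemma lerch:
  fixes p :: nat and W :: int
  assumes "prime p" "odd p" "fact (p - 1) = int p * W - 1"
  shows "(int p)^2 dvd (\<Sum>j<p. int j ^ (2 * (p - 1))) - (\<Sum>j<p. int j ^ (p - 1)) - int p * W"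
proof -
  define n where "n = p - 1"
  have p2: "p \<ge> 2" using prime_ge_2_nat[OF assms(1)] .
  have "p \<noteq> 2" using assms(2) by auto
  hence p3: "p \<ge> 3" using p2 by simp
  have n1: "n \<ge> 1" "even n" unfolding n_def using p3 assms(2) by auto
  define a where "a j = int j ^ n" for j
  have ferm: "\<forall>j\<in>{1..<p}. int p dvd a j - 1"
  proof
    fix j assume j: "j \<in> {1..<p}"
    have "\<not> p dvd j"
    proof
      assume "p dvd j"
      hence "p \<le> j" using j by (intro dvd_imp_le) auto
      thus False using j by simp
    qed
    hence "[j ^ (p - 1) = 1] (mod p)" by (rule fermat_theorem[OF assms(1)])
    hence "[int (j ^ n) = int 1] (mod int p)" unfolding n_def by (simp only: cong_int_iff)
    hence "[int j ^ n = 1] (mod int p)" by simp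
    thus "int p dvd a j - 1" unfolding a_def by (simp add: cong_iff_dvd_diff)
  qed
  have c1: "(int p)^2 dvd (\<Prod>j\<in>{1..<p}. a j) - 1 - (\<Sum>j\<in>{1..<p}. (a j - 1))"
    by (rule prodcong) (use ferm in auto)
  have pe1: "(\<Prod>j\<in>{1..<p}. a j) = (\<Prod>j\<in>{1..<p}. int j) ^ n"
    unfolding a_def by (rule prod_power_distrib[symmetric])
  have p0: "0 < p" using p2 by simp
  have pe2: "(\<Prod>j\<in>{1..<p}. int j) = fact (p - 1)"
    using prod_int_fact[of "p - 1"] by (simp only: Suc_diff_1[OF p0])
  have pe3: "(fact (p - 1) :: int) = - (1 + int p * (- W))" using assms(3) by simp
  have pe4: "(- (1 + int p * (- W))) ^ n = (1 + int p * (- W)) ^ n"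
    using n1(2) by (rule power_minus_even)
  have prodeq: "(\<Prod>j\<in>{1..<p}. a j) = (1 + int p * (- W)) ^ n"
    unfolding pe1 pe2 pe3 pe4 by (rule refl)
  have c2: "(int p)^2 dvd (1 + int p * (- W))^n - 1 - int n * int p * (- W)" by (rule powcong)
  have nn: "int n * int p * (- W) = int p * W - (int p)^2 * W"
    unfolding n_def using p2 by (simp add: of_nat_diff algebra_simps power2_eq_square)
  have c3eq: "X - 1 - int p * W = (X - 1 - int n * int p * (- W)) - (int p)^2 * W" for X :: int
    unfolding nn by (simp add: algebra_simps)
  have c3: "(int p)^2 dvd (\<Prod>j\<in>{1..<p}. a j) - 1 - int p * W"
    unfolding prodeq c3eq[of "(1 + int p * (- W))^n"] by (rule dvd_diff[OF c2 dvd_triv_left])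
  have c4: "(int p)^2 dvd (\<Sum>j\<in>{1..<p}. (a j - 1)) - int p * W"
  proof -
    have eq: "(\<Sum>j\<in>{1..<p}. (a j - 1)) - int p * W =
       ((\<Prod>j\<in>{1..<p}. a j) - 1 - int p * W) - ((\<Prod>j\<in>{1..<p}. a j) - 1 - (\<Sum>j\<in>{1..<p}. (a j - 1)))"
      by simp
    show ?thesis unfolding eq by (rule dvd_diff[OF c3 c1])
  qed
  have c5: "(int p)^2 dvd (\<Sum>j\<in>{1..<p}. (a j - 1)^2)"
  proof (rule dvd_sum)
    fix j assume jin: "j \<in> {1..<p}"
    have pj: "int p dvd a j - 1" using ferm jin by (rule bspec)
    have "int p * int p dvd (a j - 1) * (a j - 1)" by (rule mult_dvd_mono[OF pj pj])
    thus "(int p)^2 dvd (a j - 1)^2" by (simp add: power2_eq_square)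
  qed
  have split: "(\<Sum>j<p. f j) = f 0 + (\<Sum>j\<in>{1..<p}. f j)" for f :: "nat \<Rightarrow> int"
  proof -
    have "{..<p} = insert 0 {1..<p}" using p2 by auto
    thus ?thesis by simp
  qed
  have "(\<Sum>j<p. int j ^ (2 * (p - 1))) - (\<Sum>j<p. int j ^ (p - 1)) = (\<Sum>j<p. int j ^ (2 * n) - int j ^ n)"
    unfolding n_def by (simp add: sum_subtractf)
  also have "\<dots> = (\<Sum>j\<in>{1..<p}. int j ^ (2 * n) - int j ^ n)"
  proof -
    have z: "(0::int) ^ (2 * n) = 0" "(0::int) ^ n = 0" using n1(1) by simp_all
    show ?thesis using split[of "\<lambda>j. int j ^ (2 * n) - int j ^ n"] by (simp add: z)
  qed
  also have "\<dots> = (\<Sum>j\<in>{1..<p}. (a j - 1)) + (\<Sum>j\<in>{1..<p}. (a j - 1)^2)"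
    unfolding sum.distrib[symmetric] a_def
    by (rule sum.cong[OF refl]) (simp add: power2_eq_square power_mult algebra_simps)
  finally have E: "(\<Sum>j<p. int j ^ (2 * (p - 1))) - (\<Sum>j<p. int j ^ (p - 1)) =
      (\<Sum>j\<in>{1..<p}. (a j - 1)) + (\<Sum>j\<in>{1..<p}. (a j - 1)^2)" .
  have "(\<Sum>j<p. int j ^ (2 * (p - 1))) - (\<Sum>j<p. int j ^ (p - 1)) - int p * W
      = ((\<Sum>j\<in>{1..<p}. (a j - 1)) - int p * W) + (\<Sum>j\<in>{1..<p}. (a j - 1)^2)"
    unfolding E by simp
  thus ?thesis by (simp only:) (rule dvd_add[OF c4 c5])
qed


lemma bern_small: "bernoulli 2 = 1/6" "bernoulli 4 = -1/30"
proof -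
  have f: "\<And>n. (\<Sum>j<(1::nat). (of_nat j :: rat) ^ n) =
     (\<Sum>i\<le>n. of_nat (n choose i) * bernoulli i * of_nat 1 ^ (n + 1 - i) / of_nat (n + 1 - i))"
    by (rule faulhaber)
  have b0: "bernoulli 0 = 1" using f[of 0] by simp
  have b1: "bernoulli 1 = -1/2" using f[of 1] b0 by (simp add: eval_nat_numeral) 
  have b3: "bernoulli 3 = 0" by (rule bernoulli_odd) auto
  have e2: "0 = bernoulli 0 / 3 + bernoulli 1 + bernoulli 2"
    using f[of 2] by (simp add: eval_nat_numeral)
  thus b2: "bernoulli 2 = 1/6" using b0 b1 by simp
  have e4: "0 = bernoulli 0 / 5 + bernoulli 1 + 2 * bernoulli 2 + 2 * bernoulli 3 + bernoulli 4"
    using f[of 4] by (simp add: eval_nat_numeral)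
  thus "bernoulli 4 = -1/30" using b0 b1 b2 b3 by simp
qed

lemma Bdiff_cong:
  assumes "prime p" "odd p" "fact (p - 1) = int p * W - 1"
  shows "pint p ((bernoulli (2 * (p - 1)) - bernoulli (p - 1) - of_int W) / of_nat p)"
proof (cases "p = 3")
  case True
  have "(fact 2 :: int) = 2" by (simp add: eval_nat_numeral)
  hence "W = 1" using assms(3) True by simp
  hence eq: "(bernoulli (2 * (p - 1)) - bernoulli (p - 1) - of_int W) / of_nat p = of_int (-2) / of_int 5"
    using True bern_small by simp
  have "coprime (5::int) (int 3)" using prime_imp_coprime[of "5::int" 3] by simp
  hence "coprime (5::int) (int p)" using True by simp
  thus ?thesis unfolding eq by (intro pintI) simp_all
next
  case False
  have p2: "p \<ge> 2" using prime_ge_2_nat[OF assms(1)] .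
  have "p \<noteq> 2" "p \<noteq> 4" using assms(2) by auto
  hence p5: "p \<ge> 5" using p2 False by simp
  have p0: "(of_nat p :: rat) \<noteq> 0" using p2 by simp
  let ?n = "p - 1" and ?m = "2 * (p - 1)"
  have ev: "even ?n" "even ?m" "?n \<ge> 4" "?m \<ge> 4" using assms(2) p5 by auto
  have c1: "pint p ((of_nat p * bernoulli ?n - Ssum p ?n) / of_nat p ^ 2)"
    using pB_cong[OF assms(1) p5 ev(1) ev(3)] .
  have c2: "pint p ((of_nat p * bernoulli ?m - Ssum p ?m) / of_nat p ^ 2)"
    using pB_cong[OF assms(1) p5 ev(2) ev(4)] .
  obtain k where k: "(\<Sum>j<p. int j ^ ?m) - (\<Sum>j<p. int j ^ ?n) - int p * W = (int p)^2 * k"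
    using lerch[OF assms] by (elim dvdE)
  have Ss: "Ssum p n = of_int (\<Sum>j<p. int j ^ n)" for n
    unfolding Ssum_def by simp
  have "(Ssum p ?m - Ssum p ?n - of_nat p * of_int W) = of_int ((\<Sum>j<p. int j ^ ?m) - (\<Sum>j<p. int j ^ ?n) - int p * W)"
    unfolding Ss by simp
  also have "\<dots> = of_nat p ^ 2 * of_int k" unfolding k by simp
  finally have c3: "(Ssum p ?m - Ssum p ?n - of_nat p * of_int W) / of_nat p ^ 2 = of_int k"
    using p0 by simp
  have "(bernoulli ?m - bernoulli ?n - of_int W) / of_nat p =
      (of_nat p * bernoulli ?m - Ssum p ?m) / of_nat p ^ 2 - (of_nat p * bernoulli ?n - Ssum p ?n) / of_nat p ^ 2
      + (Ssum p ?m - Ssum p ?n - of_nat p * of_int W) / of_nat p ^ 2"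
    using p0 by (simp add: field_simps power2_eq_square)
  thus ?thesis unfolding c3 using c1 c2 by (simp add: pint_add pint_diff)
qed

theorem mainTheorem12:
  fixes p :: nat
  assumes "prime p" and "odd p"
  shows "rat_cong (Zplus p)
           (bernoulli (2 * (p - 1)) - bernoulli (p - 1) - harmonic ((p - 1) div 2) / 2) p
       \<and> rat_cong (Zplus p) ((M 0 p + M ((p - 1) div 2) p) / 2) p"
proof -
  have pp: "p > 0" using prime_gt_0_nat[OF assms(1)] .
  have "[fact (p - 1) = - 1] (mod int p)" using wilson_theorem[OF assms(1)] .
  hence "int p dvd fact (p - 1) + 1" by (simp add: cong_iff_dvd_diff)
  then obtain W where W0: "fact (p - 1) + 1 = int p * W" by (elim dvdE)
  hence Wi: "(fact (p - 1) :: int) = int p * W - 1" by simp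
  hence "(of_int (fact (p - 1)) :: rat) = of_int (int p * W - 1)" by simp
  hence Wr: "(fact (p - 1) :: rat) = of_nat p * of_int W - 1" by simp
  define h where "h = (p - 1) div 2"
  have hp: "h < p" unfolding h_def using pp by simp
  have Z: "pint p ((Zplus p - (of_int W - harmonic h / 2)) / of_nat p)"
    unfolding h_def by (rule Z_cong[OF assms Wr])
  have M0: "pint p ((M 0 p - (of_int W - harmonic 0)) / of_nat p)"
    by (rule M_cong[OF assms(1) pp Wr])
  have Mh: "pint p ((M h p - (of_int W - harmonic h)) / of_nat p)"
    by (rule M_cong[OF assms(1) hp Wr])
  have B: "pint p ((bernoulli (2 * (p - 1)) - bernoulli (p - 1) - of_int W) / of_nat p)"
    by (rule Bdiff_cong[OF assms Wi])
  have half: "pint p (1 / 2)" by (rule pint_half[OF assms])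
  have p0: "(of_nat p :: rat) \<noteq> 0" using pp by simp
  have e1: "(Zplus p - (bernoulli (2 * (p - 1)) - bernoulli (p - 1) - harmonic h / 2)) / of_nat p
     = (Zplus p - (of_int W - harmonic h / 2)) / of_nat p - (bernoulli (2 * (p - 1)) - bernoulli (p - 1) - of_int W) / of_nat p"
    using p0 by (simp add: field_simps)
  have e2: "(Zplus p - (M 0 p + M h p) / 2) / of_nat p
     = (Zplus p - (of_int W - harmonic h / 2)) / of_nat p - (1 / 2) * ((M 0 p - (of_int W - harmonic 0)) / of_nat p
        + (M h p - (of_int W - harmonic h)) / of_nat p)"
    using p0 by (simp add: field_simps)
  have r1: "rat_cong (Zplus p) (bernoulli (2 * (p - 1)) - bernoulli (p - 1) - harmonic h / 2) p"
    unfolding rat_cong_iff[OF pp] e1 using Z B by (rule pint_diff)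
  have r2: "rat_cong (Zplus p) ((M 0 p + M h p) / 2) p"
    unfolding rat_cong_iff[OF pp] e2
    by (rule pint_diff[OF Z pint_mult[OF half pint_add[OF M0 Mh]]])
  show ?thesis using r1 r2 unfolding h_def by simp
qed


end
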